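(* Let $A$ be a nontrivial commutative ring. The following conditions are equivalent: (a) $A$ is sublocalizable. (b) $1 + A^\times \subseteq A^\times \cup J(A)$. (c) $A^\times \cup J(A)$ is a subring of $A$. (d) There exists a proper ideal $I$ of $A$ such that $A^\times \cup I$ is a subring of $A$. (e) $J(A)$ is the unique proper ideal $I$ of $A$ such that $A^\times \cup I$ is a subring of $A$. (f) $B\setminus A^\times$ is an ideal of $A$ for some subring $B$ of $A$ containing $A^\times$ (in which case $B = A^\times \cup J(A)$ and $B\setminus A^\times = J(A)$ are unique). (g) $A^\times \cup J(A)$ is a local subring of $A$ (with maximal ideal $J(A)$ and having the same units as $A$). (h) $A$ has a (unique) local subring with maximal ideal $J(A)$ and having the same units as $A$. (i) $A$ has a (unique) local subring whose maximal ideal is also an ideal of $A$ and whose units are the same as those of $A$. (j) $A$ has a (unique) local subring $B$ with $B^\times = A^\times$ and $J(B) = J(A)$. (k) $A/J(A)$ is sublocalizable. (l) $A/J(A)$ is unit-additive.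
   Context: $A^\times$ is the unit group and $J(A)$ the Jacobson radical of $A$; $1+A^\times=\{1+u\mid u\in A^\times\}$ and $A^\times+A^\times=\{u+v\mid u,v\in A^\times\}$. A commutative ring $A$ is sublocalizable if it is nontrivial and $A^\times+A^\times\subseteq A^\times\cup J(A)$. A commutative ring is unit-additive if for all units $u,v$, $u+v$ is a unit or nilpotent. *)

theory Defs
  imports "HOL-Algebra.Algebra"
begin

definition jacobson :: "('a, 'b) ring_scheme \<Rightarrow> 'a set" where
  "jacobson R = carrier R \<inter> \<Inter> {M. maximalideal M R}"

definition local_ring :: "('a, 'b) ring_scheme \<Rightarrow> bool" where
  "local_ring R \<longleftrightarrow> cring R \<and> \<one>\<^bsub>R\<^esub> \<noteq> \<zero>\<^bsub>R\<^esub> \<and> (\<exists>!M. maximalideal M R)"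

definition sublocalizable :: "('a, 'b) ring_scheme \<Rightarrow> bool" where
  "sublocalizable R \<longleftrightarrow> \<one>\<^bsub>R\<^esub> \<noteq> \<zero>\<^bsub>R\<^esub> \<and>
     (\<forall>u \<in> Units R. \<forall>v \<in> Units R. u \<oplus>\<^bsub>R\<^esub> v \<in> Units R \<union> jacobson R)"

definition unit_additive :: "('a, 'b) ring_scheme \<Rightarrow> bool" where
  "unit_additive R \<longleftrightarrow>
     (\<forall>u \<in> Units R. \<forall>v \<in> Units R. u \<oplus>\<^bsub>R\<^esub> v \<in> Units R \<or>
        (\<exists>n::nat. (u \<oplus>\<^bsub>R\<^esub> v) [^]\<^bsub>R\<^esub> n = \<zero>\<^bsub>R\<^esub>))"

end

theory Submission
  imports Defs
begin

context cring begin

lemma krull: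
  assumes I: "ideal I R" and one: "\<one> \<notin> I"
  shows "\<exists>M. maximalideal M R \<and> I \<subseteq> M"
proof -
  define AA where "AA = {K. ideal K R \<and> I \<subseteq> K \<and> \<one> \<notin> K}"
  have "\<exists>M\<in>AA. \<forall>Z\<in>AA. M \<subseteq> Z \<longrightarrow> Z = M"
  proof (rule subset_Zorn)
    fix C assume C: "subset.chain AA C"
    show "\<exists>U\<in>AA. \<forall>Z\<in>C. Z \<subseteq> U"
    proof (cases "C = {}")
      case True thus ?thesis using I one AA_def by auto
    next
      case False
      have ch: "subset.chain {I. ideal I R} C" using C unfolding pred_on.chain_def AA_def by auto
      have "ideal (\<Union>C) R" using chain_Union_is_ideal[OF ch] False by simp
      moreover have "I \<subseteq> \<Union>C" using False C unfolding pred_on.chain_def AA_def by blast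
      moreover have "\<one> \<notin> \<Union>C" using C unfolding pred_on.chain_def AA_def by auto
      ultimately show ?thesis unfolding AA_def by auto
    qed
  qed
  then obtain M where M: "M \<in> AA" "\<And>Z. Z \<in> AA \<Longrightarrow> M \<subseteq> Z \<Longrightarrow> Z = M" by blast
  have "maximalideal M R"
  proof (rule maximalidealI)
    show "ideal M R" using M AA_def by auto
    show "carrier R \<noteq> M" using M AA_def by auto
    fix K assume K: "ideal K R" "M \<subseteq> K" "K \<subseteq> carrier R"
    show "K = M \<or> K = carrier R"
    proof (cases "\<one> \<in> K")
      case True thus ?thesis using ideal.one_imp_carrier[OF K(1)] by auto
    next
      case False
      then have "K \<in> AA" using K M AA_def by auto
      thus ?thesis using M K by auto
    qed
  qed
  thus ?thesis using M AA_def by auto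
qed

lemma nonunit_in_max:
  assumes x: "x \<in> carrier R" "x \<notin> Units R"
  shows "\<exists>M. maximalideal M R \<and> x \<in> M"
proof -
  have "\<one> \<notin> PIdl x"
  proof
    assume "\<one> \<in> PIdl x"
    then obtain y where y: "y \<in> carrier R" "\<one> = y \<otimes> x" unfolding cgenideal_def by auto
    then have "x \<in> Units R" using x m_comm[of x y] unfolding Units_def by auto
    thus False using x by auto
  qed
  then obtain M where "maximalideal M R" "PIdl x \<subseteq> M" using krull cgenideal_ideal[OF x(1)] by blast
  thus ?thesis using cgenideal_self[OF x(1)] by auto
qed

lemma max_inv:
  assumes M: "maximalideal M R" and a: "a \<in> carrier R" "a \<notin> M"
  shows "\<exists>r\<in>carrier R. \<exists>i\<in>M. \<one> = r \<otimes> a \<oplus> i"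
proof -
  interpret maximalideal M R by fact
  define K :: "'a set" where "K = (carrier R #> a) <+> M"
  have idealK: "ideal K R"
    using K_def a add_ideals cgenideal_eq_rcos cgenideal_ideal is_ideal by auto
  have MK: "M \<subseteq> K"
  proof (clarsimp simp: K_def r_coset_def set_add_defs)
    fix x assume xI: "x \<in> M"
    have "x = \<zero> \<otimes> a \<oplus> x" by (simp add: a xI)
    with xI show "\<exists>xa\<in>carrier R. \<exists>k\<in>M. x = xa \<otimes> a \<oplus> k" by fast
  qed
  have "a \<in> K"
  proof (simp add: K_def r_coset_def set_add_defs)
    from a have "a = \<one> \<otimes> a \<oplus> \<zero>" by algebra
    with one_closed and additive_subgroup.zero_closed[OF is_additive_subgroup]
    show "\<exists>x\<in>carrier R. \<exists>k\<in>M. a = x \<otimes> a \<oplus> k" by fast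
  qed
  then have "K \<noteq> M" using a by auto
  then have "K = carrier R"
    using I_maximal MK additive_subgroup.a_subset idealK ideal_def by blast
  from one_closed[folded this] show ?thesis
    by (auto simp add: K_def r_coset_def set_add_defs)
qed

lemma max_no_units:
  assumes "maximalideal M R" "x \<in> M"
  shows "x \<notin> Units R"
proof
  assume u: "x \<in> Units R"
  interpret maximalideal M R by fact
  have "inv x \<otimes> x \<in> M" using assms(2) u I_l_closed Units_inv_closed Units_closed by blast
  then have "\<one> \<in> M" using u Units_l_inv by simp
  then show False using one_imp_carrier I_notcarr by auto
qed

lemma jac_char:
  "jacobson R = {x \<in> carrier R. \<forall>r\<in>carrier R. \<one> \<oplus> r \<otimes> x \<in> Units R}"
proof (intro equalityI subsetI)
  fix x assume x: "x \<in> jacobson R"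
  then have xc: "x \<in> carrier R" and xM: "\<And>M. maximalideal M R \<Longrightarrow> x \<in> M" unfolding jacobson_def by auto
  show "x \<in> {x \<in> carrier R. \<forall>r\<in>carrier R. \<one> \<oplus> r \<otimes> x \<in> Units R}"
  proof (simp add: xc, intro ballI, rule ccontr)
    fix r assume r: "r \<in> carrier R" and nu: "\<one> \<oplus> r \<otimes> x \<notin> Units R"
    then obtain M where M: "maximalideal M R" "\<one> \<oplus> r \<otimes> x \<in> M" using nonunit_in_max[of "\<one> \<oplus> r \<otimes> x"] r xc by auto
    interpret maximalideal M R by fact
    have "r \<otimes> x \<in> M" using xM[OF M(1)] r by (simp add: I_l_closed)
    then have "(\<one> \<oplus> r \<otimes> x) \<ominus> r \<otimes> x \<in> M" using M(2) by (simp add: a_minus_def a_inv_closed a_closed)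
    moreover have "(\<one> \<oplus> r \<otimes> x) \<ominus> r \<otimes> x = \<one>" using r xc by algebra
    ultimately have "\<one> \<in> M" by simp
    then show False using one_imp_carrier I_notcarr by auto
  qed
next
  fix x assume x: "x \<in> {x \<in> carrier R. \<forall>r\<in>carrier R. \<one> \<oplus> r \<otimes> x \<in> Units R}"
  then have xc: "x \<in> carrier R" and H: "\<And>r. r \<in> carrier R \<Longrightarrow> \<one> \<oplus> r \<otimes> x \<in> Units R" by auto
  have "x \<in> M" if M: "maximalideal M R" for M
  proof (rule ccontr)
    assume "x \<notin> M"
    then obtain r i where ri: "r \<in> carrier R" "i \<in> M" "\<one> = r \<otimes> x \<oplus> i" using max_inv[OF M xc] by auto
    interpret maximalideal M R by fact
    have ic: "i \<in> carrier R" using ri(2) a_Hcarr by auto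
    have "\<one> \<oplus> (\<ominus> r) \<otimes> x = i" using ri ic xc by algebra
    then have "i \<in> Units R" using H[of "\<ominus> r"] ri by auto
    thus False using max_no_units[OF M ri(2)] by auto
  qed
  thus "x \<in> jacobson R" unfolding jacobson_def using xc by auto
qed


lemma exists_max:
  assumes "\<one> \<noteq> \<zero>" shows "\<exists>M. maximalideal M R"
  using krull[OF zeroideal] assms by auto

lemma jac_carr: "jacobson R \<subseteq> carrier R"
  unfolding jacobson_def by auto

lemma jac_ideal:
  assumes "\<one> \<noteq> \<zero>" shows "ideal (jacobson R) R"
proof -
  have ne: "{M. maximalideal M R} \<noteq> {}" using exists_max[OF assms] by auto
  have "jacobson R = \<Inter>{M. maximalideal M R}"
    unfolding jacobson_def using ne maximalideal.axioms(1) ideal.Icarr by fastforce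
  thus ?thesis using i_Intersect[OF _ ne] maximalideal.axioms(1) by auto
qed

lemma jac_no_units:
  assumes "\<one> \<noteq> \<zero>" "x \<in> jacobson R" shows "x \<notin> Units R"
proof -
  obtain M where M: "maximalideal M R" using exists_max[OF assms(1)] by auto
  then have "x \<in> M" using assms(2) unfolding jacobson_def by auto
  thus ?thesis using max_no_units[OF M] by auto
qed

lemma jac_elem:
  assumes "x \<in> jacobson R" "r \<in> carrier R" shows "\<one> \<oplus> r \<otimes> x \<in> Units R"
  using assms jac_char by auto

lemma key:
  assumes nt: "\<one> \<noteq> \<zero>" and B: "subring B R" and UB: "Units R \<subseteq> B" and I: "ideal (B - Units R) R"
  shows "B - Units R = jacobson R \<and> B = Units R \<union> jacobson R"
proof -
  have Bc: "B \<subseteq> carrier R" using subringE(1)[OF B] .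
  have 1: "B - Units R \<subseteq> jacobson R"
  proof
    fix x assume x: "x \<in> B - Units R"
    have xc: "x \<in> carrier R" using x Bc by auto
    have "\<one> \<oplus> r \<otimes> x \<in> Units R" if r: "r \<in> carrier R" for r
    proof (rule ccontr)
      assume nu: "\<one> \<oplus> r \<otimes> x \<notin> Units R"
      have rx: "r \<otimes> x \<in> B - Units R" using ideal.I_l_closed[OF I x r] .
      have "\<one> \<oplus> r \<otimes> x \<in> B" using rx subringE(3,7)[OF B] by auto
      then have a: "\<one> \<oplus> r \<otimes> x \<in> B - Units R" using nu by auto
      have "(\<one> \<oplus> r \<otimes> x) \<ominus> r \<otimes> x \<in> B - Units R"
        using a rx additive_subgroup.a_closed[OF ideal.axioms(1)[OF I]] additive_subgroup.a_inv_closed[OF ideal.axioms(1)[OF I]]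
        unfolding a_minus_def by blast
      moreover have "(\<one> \<oplus> r \<otimes> x) \<ominus> r \<otimes> x = \<one>" using r xc by algebra
      ultimately show False by auto
    qed
    thus "x \<in> jacobson R" using jac_char xc by auto
  qed
  have 2: "jacobson R \<subseteq> B - Units R"
  proof
    fix x assume x: "x \<in> jacobson R"
    have xc: "x \<in> carrier R" using x jac_carr by auto
    have "\<one> \<oplus> \<one> \<otimes> x \<in> Units R" using jac_elem[OF x] by auto
    then have "\<one> \<oplus> x \<in> B" using UB xc by auto
    then have "(\<one> \<oplus> x) \<oplus> \<ominus> \<one> \<in> B" using subringE(3,5,7)[OF B] by auto
    moreover have "(\<one> \<oplus> x) \<oplus> \<ominus> \<one> = x" using xc by algebra
    ultimately show "x \<in> B - Units R" using jac_no_units[OF nt x] by auto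
  qed
  show ?thesis using 1 2 UB by auto
qed

lemma subl_subring:
  assumes S: "sublocalizable R" shows "subring (Units R \<union> jacobson R) R"
proof -
  have nt: "\<one> \<noteq> \<zero>" using S unfolding sublocalizable_def by auto
  have add: "u \<oplus> v \<in> Units R \<union> jacobson R" if "u \<in> Units R" "v \<in> Units R" for u v
    using S that unfolding sublocalizable_def by auto
  have JI: "ideal (jacobson R) R" using jac_ideal[OF nt] .
  have uj: "u \<oplus> j \<in> Units R" if u: "u \<in> Units R" and j: "j \<in> jacobson R" for u j
  proof -
    have jc: "j \<in> carrier R" using j jac_carr by auto
    have "\<one> \<oplus> inv u \<otimes> j \<in> Units R" using jac_elem[OF j] u by auto
    then have "u \<otimes> (\<one> \<oplus> inv u \<otimes> j) \<in> Units R" using u by auto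
    moreover have "u \<otimes> (\<one> \<oplus> inv u \<otimes> j) = u \<oplus> j"
    proof -
      have uc: "u \<in> carrier R" "inv u \<in> carrier R" using u by auto
      have "u \<otimes> (\<one> \<oplus> inv u \<otimes> j) = u \<otimes> \<one> \<oplus> (u \<otimes> inv u) \<otimes> j"
        using uc jc by (simp add: r_distr m_assoc)
      also have "\<dots> = u \<oplus> j" using uc jc u by (simp add: Units_r_inv)
      finally show ?thesis .
    qed
    ultimately show ?thesis by simp
  qed
  show ?thesis
  proof (rule subringI)
    show "Units R \<union> jacobson R \<subseteq> carrier R" using jac_carr by auto
    show "\<one> \<in> Units R \<union> jacobson R" by auto
  next
    fix h assume h: "h \<in> Units R \<union> jacobson R"
    show "\<ominus> h \<in> Units R \<union> jacobson R"
    proof (cases "h \<in> Units R")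
      case True
      then have "(\<ominus> \<one>) \<otimes> h \<in> Units R" by auto
      moreover have "(\<ominus> \<one>) \<otimes> h = \<ominus> h" using True Units_closed[OF True] l_minus[of "\<one>" h] by simp
      ultimately show ?thesis by simp
    next
      case False
      then show ?thesis using h additive_subgroup.a_inv_closed[OF ideal.axioms(1)[OF JI]] by auto
    qed
  next
    fix h1 h2 assume h: "h1 \<in> Units R \<union> jacobson R" "h2 \<in> Units R \<union> jacobson R"
    have c: "h1 \<in> carrier R" "h2 \<in> carrier R" using h jac_carr by auto
    show "h1 \<otimes> h2 \<in> Units R \<union> jacobson R"
      using h c ideal.I_l_closed[OF JI] ideal.I_r_closed[OF JI] by auto
    show "h1 \<oplus> h2 \<in> Units R \<union> jacobson R"
      using h c add uj[of h1 h2] uj[of h2 h1] a_comm[OF c] additive_subgroup.a_closed[OF ideal.axioms(1)[OF JI]] by auto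
  qed
qed

lemma subring_subl:
  assumes nt: "\<one> \<noteq> \<zero>" and B: "subring (Units R \<union> jacobson R) R" shows "sublocalizable R"
  unfolding sublocalizable_def using nt subringE(7)[OF B] by auto

lemma sub_units:
  assumes B: "subring B R" and UB: "Units R \<subseteq> B"
  shows "Units (R\<lparr>carrier := B\<rparr>) = Units R"
proof -
  have Bc: "B \<subseteq> carrier R" using subringE(1)[OF B] .
  show ?thesis
  proof (intro equalityI subsetI)
    fix x assume "x \<in> Units (R\<lparr>carrier := B\<rparr>)"
    thus "x \<in> Units R" using Bc unfolding Units_def by auto
  next
    fix x assume x: "x \<in> Units R"
    have "inv x \<in> B" "x \<in> B" using x UB by auto
    have e: "inv x \<otimes> x = \<one>" "x \<otimes> inv x = \<one>" using x by (simp_all add: Units_l_inv Units_r_inv)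
    show "x \<in> Units (R\<lparr>carrier := B\<rparr>)" unfolding Units_def using \<open>inv x \<in> B\<close> \<open>x \<in> B\<close> e by auto
  qed
qed

lemma sub_units_le:
  assumes B: "subring B R"
  shows "Units (R\<lparr>carrier := B\<rparr>) \<subseteq> Units R"
  using subringE(1)[OF B] unfolding Units_def by auto

lemma sub_cring:
  assumes B: "subring B R" shows "cring (R\<lparr>carrier := B\<rparr>)"
  using subcring_iff[OF subringE(1)[OF B]] subcringI'[OF B] by auto

lemma sub_ideal:
  assumes I: "ideal I R" and IB: "I \<subseteq> B" and B: "subring B R"
  shows "ideal I (R\<lparr>carrier := B\<rparr>)"
proof -
  have Bc: "B \<subseteq> carrier R" using subringE(1)[OF B] .
  interpret S: cring "R\<lparr>carrier := B\<rparr>" using sub_cring[OF B] .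
  have h: "ring_hom_ring (R\<lparr>carrier := B\<rparr>) R id"
  proof (rule ring_hom_ringI2)
    show "ring (R\<lparr>carrier := B\<rparr>)" by (rule S.ring_axioms)
    show "ring R" by (rule ring_axioms)
    show "id \<in> ring_hom (R\<lparr>carrier := B\<rparr>) R"
      by (rule ring_hom_memI) (use Bc in auto)
  qed
  have "ideal {r \<in> carrier (R\<lparr>carrier := B\<rparr>). id r \<in> I} (R\<lparr>carrier := B\<rparr>)"
    using ring_hom_ring.ideal_vimage[OF h I] .
  moreover have "{r \<in> carrier (R\<lparr>carrier := B\<rparr>). id r \<in> I} = I" using IB by auto
  ultimately show ?thesis by simp
qed


lemma L3:
  assumes nt: "\<one> \<noteq> \<zero>" and N: "ideal (carrier R - Units R) R"
  shows "maximalideal (carrier R - Units R) R \<and> (\<forall>M. maximalideal M R \<longrightarrow> M = carrier R - Units R)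
     \<and> local_ring R \<and> jacobson R = carrier R - Units R"
proof -
  let ?N = "carrier R - Units R"
  have ne: "?N \<noteq> carrier R" by (metis DiffD2 Units_one_closed one_closed)
  have mx: "maximalideal ?N R"
  proof (rule maximalidealI[OF N])
    show "carrier R \<noteq> ?N" using ne by argo
    fix K assume K: "ideal K R" "?N \<subseteq> K" "K \<subseteq> carrier R"
    show "K = ?N \<or> K = carrier R"
    proof (cases "K \<inter> Units R = {}")
      case True
      have "K \<subseteq> ?N" using K(3) True by blast
      then have "K = ?N" using K(2) by (rule subset_antisym)
      then show ?thesis by (rule disjI1)
    next
      case False
      then obtain u where u: "u \<in> K" "u \<in> Units R" by blast
      have "inv u \<otimes> u \<in> K" using ideal.I_l_closed[OF K(1) u(1) Units_inv_closed[OF u(2)]] .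
      then have "\<one> \<in> K" using Units_l_inv[OF u(2)] by simp
      then have "K = carrier R" using ideal.one_imp_carrier[OF K(1)] by blast
      then show ?thesis by (rule disjI2)
    qed
  qed
  have uniq: "M = ?N" if M: "maximalideal M R" for M
  proof -
    have "M \<subseteq> ?N"
    proof
      fix x assume "x \<in> M"
      then show "x \<in> ?N" using max_no_units[OF M] ideal.Icarr[OF maximalideal.axioms(1)[OF M]] by blast
    qed
    then have "?N = M \<or> ?N = carrier R" using maximalideal.I_maximal[OF M N] by blast
    thus ?thesis using ne by argo
  qed
  have set: "{M. maximalideal M R} = {?N}" using uniq mx by blast
  have jac: "jacobson R = ?N" unfolding jacobson_def set by blast
  have ex: "\<exists>!M. maximalideal M R" using mx uniq by blast
  have loc: "local_ring R" unfolding local_ring_def using is_cring nt ex by blast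
  show ?thesis using mx uniq jac loc by blast
qed

lemma L2:
  assumes L: "local_ring R"
  shows "\<exists>M. maximalideal M R \<and> (\<forall>M'. maximalideal M' R \<longrightarrow> M' = M)
     \<and> carrier R - Units R = M \<and> jacobson R = M"
proof -
  have ex: "\<exists>!M. maximalideal M R"
    using L unfolding local_ring_def by blast
  obtain M where M: "maximalideal M R" and u: "\<And>M'. maximalideal M' R \<Longrightarrow> M' = M" using ex by blast
  have Mc: "M \<subseteq> carrier R" using ideal.Icarr[OF maximalideal.axioms(1)[OF M]] by blast
  have e1: "carrier R - Units R = M"
  proof (intro equalityI subsetI)
    fix x assume x: "x \<in> carrier R - Units R"
    then obtain M' where "maximalideal M' R" "x \<in> M'" using nonunit_in_max[of x] by blast
    then show "x \<in> M" using u by blast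
  next
    fix x assume "x \<in> M"
    then show "x \<in> carrier R - Units R" using max_no_units[OF M] Mc by blast
  qed
  have set: "{M'. maximalideal M' R} = {M}" using M u by blast
  have e2: "jacobson R = M" unfolding jacobson_def set using Mc by blast
  show ?thesis using M u e1 e2 by blast
qed

lemma Q_cring: assumes nt: "\<one> \<noteq> \<zero>" shows "cring (R Quot jacobson R)"
  using ideal.quotient_is_cring[OF jac_ideal[OF nt] is_cring] .

lemma Q_hom: assumes nt: "\<one> \<noteq> \<zero>"
  shows "ring_hom_ring R (R Quot jacobson R) ((+>) (jacobson R))"
  using ideal.rcos_ring_hom_ring[OF jac_ideal[OF nt]] .

lemma Q_carrier: "carrier (R Quot jacobson R) = (\<lambda>x. jacobson R +> x) ` carrier R"
  unfolding FactRing_def A_RCOSETS_def' by auto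

lemma Q_zero: "\<zero>\<^bsub>R Quot jacobson R\<^esub> = jacobson R"
  unfolding FactRing_def by simp

lemma Q_one: "\<one>\<^bsub>R Quot jacobson R\<^esub> = jacobson R +> \<one>"
  unfolding FactRing_def by simp

lemma Q_eq_zero: assumes nt: "\<one> \<noteq> \<zero>" and x: "x \<in> carrier R"
  shows "(jacobson R +> x = jacobson R) \<longleftrightarrow> x \<in> jacobson R"
proof -
  interpret JI: ideal "jacobson R" R using jac_ideal[OF nt] .
  show ?thesis
  proof
    assume "jacobson R +> x = jacobson R"
    then show "x \<in> jacobson R" using JI.a_rcos_self[OF x] by simp
  next
    assume "x \<in> jacobson R"
    then show "jacobson R +> x = jacobson R" by (rule JI.a_rcos_const)
  qed
qed

lemma Q_nt: assumes nt: "\<one> \<noteq> \<zero>"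
  shows "\<one>\<^bsub>R Quot jacobson R\<^esub> \<noteq> \<zero>\<^bsub>R Quot jacobson R\<^esub>"
  using Q_eq_zero[OF nt one_closed] jac_no_units[OF nt] unfolding Q_one Q_zero by auto

lemma Q_units: assumes nt: "\<one> \<noteq> \<zero>" and x: "x \<in> carrier R"
  shows "(jacobson R +> x \<in> Units (R Quot jacobson R)) \<longleftrightarrow> x \<in> Units R"
proof -
  let ?Q = "R Quot jacobson R" and ?h = "(+>) (jacobson R)"
  interpret H: ring_hom_ring R ?Q ?h using Q_hom[OF nt] .
  interpret Q: cring ?Q using Q_cring[OF nt] .
  interpret JI: ideal "jacobson R" R using jac_ideal[OF nt] .
  show ?thesis
  proof
    assume u: "?h x \<in> Units ?Q"
    then obtain c where c: "c \<in> carrier ?Q" "c \<otimes>\<^bsub>?Q\<^esub> ?h x = \<one>\<^bsub>?Q\<^esub>"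
      unfolding Units_def by auto
    then obtain y where y: "y \<in> carrier R" "c = ?h y" unfolding Q_carrier by auto
    have e: "?h y \<otimes>\<^bsub>?Q\<^esub> ?h x = \<one>\<^bsub>?Q\<^esub>" using c(2) unfolding y(2) .
    have "?h (y \<otimes> x) = ?h \<one>" using e H.hom_mult[OF y(1) x] H.hom_one by simp
    then have "(y \<otimes> x) \<ominus> \<one> \<in> jacobson R"
      using quotient_eq_iff_same_a_r_cos[OF jac_ideal[OF nt] m_closed[OF y(1) x] one_closed] by blast
    then have "\<one> \<oplus> \<one> \<otimes> ((y \<otimes> x) \<ominus> \<one>) \<in> Units R" by (rule jac_elem) simp
    moreover have "\<one> \<oplus> \<one> \<otimes> ((y \<otimes> x) \<ominus> \<one>) = y \<otimes> x" using x y by algebra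
    ultimately have yx: "y \<otimes> x \<in> Units R" by simp
    have wc: "inv (y \<otimes> x) \<in> carrier R" using Units_inv_closed[OF yx] .
    have wy: "inv (y \<otimes> x) \<otimes> y \<in> carrier R" using m_closed[OF wc y(1)] .
    have e1: "(inv (y \<otimes> x) \<otimes> y) \<otimes> x = \<one>"
      using m_assoc[OF wc y(1) x] Units_l_inv[OF yx] by simp
    have e2: "x \<otimes> (inv (y \<otimes> x) \<otimes> y) = \<one>"
      using m_comm[OF x wy] e1 by simp
    from wy e1 e2
    show "x \<in> Units R" unfolding Units_def using x by blast
  next
    assume u: "x \<in> Units R"
    have uc: "x \<in> carrier R" "inv x \<in> carrier R" using Units_closed[OF u] Units_inv_closed[OF u] by auto
    have "?h (inv x) \<otimes>\<^bsub>?Q\<^esub> ?h x = ?h (inv x \<otimes> x)" using H.hom_mult[OF uc(2,1)] by (rule sym)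
    also have "\<dots> = ?h \<one>" using Units_l_inv[OF u] by simp
    also have "\<dots> = \<one>\<^bsub>?Q\<^esub>" by (rule H.hom_one)
    finally have "?h (inv x) \<otimes>\<^bsub>?Q\<^esub> ?h x = \<one>\<^bsub>?Q\<^esub>" .
    moreover have "?h x \<otimes>\<^bsub>?Q\<^esub> ?h (inv x) = ?h (x \<otimes> inv x)" using H.hom_mult[OF uc(1,2)] by (rule sym)
    moreover have "?h (x \<otimes> inv x) = \<one>\<^bsub>?Q\<^esub>" using Units_r_inv[OF u] H.hom_one by simp
    moreover have "?h (inv x) \<in> carrier ?Q" "?h x \<in> carrier ?Q" using H.hom_closed uc by auto
    ultimately show "?h x \<in> Units ?Q" unfolding Units_def by blast
  qed
qed

lemma Q_jac: assumes nt: "\<one> \<noteq> \<zero>" and x: "x \<in> carrier R"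
  shows "(jacobson R +> x \<in> jacobson (R Quot jacobson R)) \<longleftrightarrow> x \<in> jacobson R"
proof -
  let ?Q = "R Quot jacobson R" and ?h = "(+>) (jacobson R)"
  interpret H: ring_hom_ring R ?Q ?h using Q_hom[OF nt] .
  interpret Q: cring ?Q using Q_cring[OF nt] .
  have "?h x \<in> jacobson ?Q \<longleftrightarrow> (\<forall>c\<in>carrier ?Q. \<one>\<^bsub>?Q\<^esub> \<oplus>\<^bsub>?Q\<^esub> c \<otimes>\<^bsub>?Q\<^esub> ?h x \<in> Units ?Q)"
    using Q.jac_char x by auto
  also have "\<dots> \<longleftrightarrow> (\<forall>r\<in>carrier R. ?h (\<one> \<oplus> r \<otimes> x) \<in> Units ?Q)"
    unfolding Q_carrier using x by auto
  also have "\<dots> \<longleftrightarrow> (\<forall>r\<in>carrier R. \<one> \<oplus> r \<otimes> x \<in> Units R)"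
    by (rule ball_cong[OF refl], rule Q_units[OF nt], use x in auto)
  also have "\<dots> \<longleftrightarrow> x \<in> jacobson R" using jac_char x by auto
  finally show ?thesis .
qed

lemma prime_radical: assumes P: "primeideal M R" and x: "x \<in> carrier R"
  shows "x [^] (n::nat) \<in> M \<Longrightarrow> x \<in> M"
proof (induction n)
  case 0
  interpret P: primeideal M R by fact
  have "\<one> \<in> M" using 0 by simp
  then show ?case using P.one_imp_carrier P.I_notcarr by auto
next
  case (Suc n)
  interpret P: primeideal M R by fact
  have "x [^] n \<otimes> x \<in> M" using Suc.prems by simp
  then have "x [^] n \<in> M \<or> x \<in> M" using P.I_prime[OF nat_pow_closed[OF x] x] by blast
  then show ?case using Suc.IH by blast
qed

lemma jac_radical: assumes nt: "\<one> \<noteq> \<zero>" and x: "x \<in> carrier R" and xn: "x [^] (n::nat) \<in> jacobson R"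
  shows "x \<in> jacobson R"
proof -
  have "x \<in> M" if M: "maximalideal M R" for M
    using prime_radical[OF maximalideal_prime[OF M] x, of n] xn M unfolding jacobson_def by blast
  then show ?thesis unfolding jacobson_def using x by blast
qed

lemma Q_units_img: assumes nt: "\<one> \<noteq> \<zero>"
  shows "Units (R Quot jacobson R) = (\<lambda>x. jacobson R +> x) ` Units R"
proof (intro equalityI subsetI)
  fix a assume a: "a \<in> Units (R Quot jacobson R)"
  then have "a \<in> carrier (R Quot jacobson R)" unfolding Units_def by blast
  then obtain x where x: "x \<in> carrier R" "a = jacobson R +> x" unfolding Q_carrier by blast
  then have "x \<in> Units R" using Q_units[OF nt x(1)] a by simp
  then show "a \<in> (\<lambda>x. jacobson R +> x) ` Units R" using x by blast
next
  fix a assume "a \<in> (\<lambda>x. jacobson R +> x) ` Units R"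
  then obtain x where x: "x \<in> Units R" "a = jacobson R +> x" by blast
  then show "a \<in> Units (R Quot jacobson R)" using Q_units[OF nt Units_closed[OF x(1)]] by simp
qed

lemma Q_add: assumes nt: "\<one> \<noteq> \<zero>" and x: "x \<in> carrier R" and y: "y \<in> carrier R"
  shows "(jacobson R +> x) \<oplus>\<^bsub>R Quot jacobson R\<^esub> (jacobson R +> y) = jacobson R +> (x \<oplus> y)"
proof -
  interpret H: ring_hom_ring R "R Quot jacobson R" "(+>) (jacobson R)" using Q_hom[OF nt] .
  show ?thesis using H.hom_add[OF x y] by (rule sym)
qed

lemma Q_subl: assumes nt: "\<one> \<noteq> \<zero>"
  shows "sublocalizable (R Quot jacobson R) \<longleftrightarrow> sublocalizable R"
proof -
  let ?Q = "R Quot jacobson R" and ?h = "\<lambda>x. jacobson R +> x"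
  have "sublocalizable ?Q \<longleftrightarrow> (\<forall>a\<in>?h ` Units R. \<forall>b\<in>?h ` Units R. a \<oplus>\<^bsub>?Q\<^esub> b \<in> Units ?Q \<union> jacobson ?Q)"
    unfolding sublocalizable_def Q_units_img[OF nt, symmetric] using Q_nt[OF nt] by blast
  also have "\<dots> \<longleftrightarrow> (\<forall>u\<in>Units R. \<forall>v\<in>Units R. ?h (u \<oplus> v) \<in> Units ?Q \<union> jacobson ?Q)"
    using Q_add[OF nt] by (auto simp: Units_closed)
  also have "\<dots> \<longleftrightarrow> (\<forall>u\<in>Units R. \<forall>v\<in>Units R. u \<oplus> v \<in> Units R \<union> jacobson R)"
    using Q_units[OF nt] Q_jac[OF nt] by (auto simp: Units_closed)
  also have "\<dots> \<longleftrightarrow> sublocalizable R" unfolding sublocalizable_def using nt by blast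
  finally show ?thesis .
qed

lemma Q_pw: assumes nt: "\<one> \<noteq> \<zero>" and w: "w \<in> carrier R"
  shows "(\<exists>n::nat. (jacobson R +> w) [^]\<^bsub>R Quot jacobson R\<^esub> n = \<zero>\<^bsub>R Quot jacobson R\<^esub>) \<longleftrightarrow> w \<in> jacobson R"
proof -
  let ?Q = "R Quot jacobson R" and ?h = "\<lambda>x. jacobson R +> x"
  interpret H: ring_hom_ring R "R Quot jacobson R" "(+>) (jacobson R)" using Q_hom[OF nt] .
  show ?thesis
  proof
    assume "\<exists>n::nat. ?h w [^]\<^bsub>?Q\<^esub> n = \<zero>\<^bsub>?Q\<^esub>"
    then obtain n :: nat where "?h w [^]\<^bsub>?Q\<^esub> n = \<zero>\<^bsub>?Q\<^esub>" by blast
    then have "?h (w [^] n) = jacobson R" using H.hom_nat_pow[OF w, of n] unfolding Q_zero by simp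
    then have "w [^] n \<in> jacobson R" using Q_eq_zero[OF nt nat_pow_closed[OF w]] by blast
    then show "w \<in> jacobson R" using jac_radical[OF nt w] by blast
  next
    assume "w \<in> jacobson R"
    then have "?h w = jacobson R" using Q_eq_zero[OF nt w] by blast
    then have "?h (w [^] (1::nat)) = jacobson R" using w by simp
    then have "?h w [^]\<^bsub>?Q\<^esub> (1::nat) = \<zero>\<^bsub>?Q\<^esub>" using H.hom_nat_pow[OF w, of 1] unfolding Q_zero by simp
    then show "\<exists>n::nat. ?h w [^]\<^bsub>?Q\<^esub> n = \<zero>\<^bsub>?Q\<^esub>" by blast
  qed
qed

lemma Q_ua: assumes nt: "\<one> \<noteq> \<zero>"
  shows "unit_additive (R Quot jacobson R) \<longleftrightarrow> sublocalizable R"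
proof -
  let ?Q = "R Quot jacobson R" and ?h = "\<lambda>x. jacobson R +> x"
  note pw = Q_pw[OF nt]
  have "unit_additive ?Q \<longleftrightarrow> (\<forall>a\<in>?h ` Units R. \<forall>b\<in>?h ` Units R. a \<oplus>\<^bsub>?Q\<^esub> b \<in> Units ?Q \<or>
        (\<exists>n::nat. (a \<oplus>\<^bsub>?Q\<^esub> b) [^]\<^bsub>?Q\<^esub> n = \<zero>\<^bsub>?Q\<^esub>))"
    unfolding unit_additive_def Q_units_img[OF nt, symmetric] by blast
  also have "\<dots> \<longleftrightarrow> (\<forall>u\<in>Units R. \<forall>v\<in>Units R. ?h (u \<oplus> v) \<in> Units ?Q \<or>
        (\<exists>n::nat. ?h (u \<oplus> v) [^]\<^bsub>?Q\<^esub> n = \<zero>\<^bsub>?Q\<^esub>))"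
    using Q_add[OF nt] by (auto simp: Units_closed)
  also have "\<dots> \<longleftrightarrow> (\<forall>u\<in>Units R. \<forall>v\<in>Units R. u \<oplus> v \<in> Units R \<or> u \<oplus> v \<in> jacobson R)"
    using Q_units[OF nt] pw by (auto simp: Units_closed)
  also have "\<dots> \<longleftrightarrow> sublocalizable R" unfolding sublocalizable_def using nt by blast
  finally show ?thesis .
qed

lemma HB:
  assumes B: "subring B R" and L: "local_ring (R\<lparr>carrier := B\<rparr>)"
    and UB: "Units (R\<lparr>carrier := B\<rparr>) = Units R"
  shows "\<exists>M. maximalideal M (R\<lparr>carrier := B\<rparr>) \<and> (\<forall>M'. maximalideal M' (R\<lparr>carrier := B\<rparr>) \<longrightarrow> M' = M)
     \<and> B - Units R = M \<and> jacobson (R\<lparr>carrier := B\<rparr>) = M \<and> Units R \<subseteq> B"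
proof -
  obtain M where M: "maximalideal M (R\<lparr>carrier := B\<rparr>)"
    "\<forall>M'. maximalideal M' (R\<lparr>carrier := B\<rparr>) \<longrightarrow> M' = M"
    "carrier (R\<lparr>carrier := B\<rparr>) - Units (R\<lparr>carrier := B\<rparr>) = M"
    "jacobson (R\<lparr>carrier := B\<rparr>) = M"
    using cring.L2[OF sub_cring[OF B] L] by blast
  have "Units (R\<lparr>carrier := B\<rparr>) \<subseteq> B" unfolding Units_def by auto
  then have "Units R \<subseteq> B" using UB by simp
  moreover have "B - Units R = M" using M(3) UB by simp
  ultimately show ?thesis using M by blast
qed

lemma G:
  assumes SL: "sublocalizable R"
  shows "subring (Units R \<union> jacobson R) R \<and> local_ring (R\<lparr>carrier := Units R \<union> jacobson R\<rparr>)
    \<and> maximalideal (jacobson R) (R\<lparr>carrier := Units R \<union> jacobson R\<rparr>)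
    \<and> Units (R\<lparr>carrier := Units R \<union> jacobson R\<rparr>) = Units R
    \<and> jacobson (R\<lparr>carrier := Units R \<union> jacobson R\<rparr>) = jacobson R"
proof -
  let ?B = "Units R \<union> jacobson R"
  let ?S = "R\<lparr>carrier := ?B\<rparr>"
  have nt: "\<one> \<noteq> \<zero>" using SL unfolding sublocalizable_def by blast
  have B: "subring ?B R" using subl_subring[OF SL] .
  have US: "Units ?S = Units R" using sub_units[OF B] by blast
  have crS: "cring ?S" using sub_cring[OF B] .
  have ntS: "\<one>\<^bsub>?S\<^esub> \<noteq> \<zero>\<^bsub>?S\<^esub>" using nt by simp
  have eq: "carrier ?S - Units ?S = jacobson R" using US jac_no_units[OF nt] by auto
  have "ideal (jacobson R) ?S" using sub_ideal[OF jac_ideal[OF nt] _ B] by blast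
  then have "ideal (carrier ?S - Units ?S) ?S" using eq by simp
  from cring.L3[OF crS ntS this] eq
  show ?thesis using B US by simp
qed

lemma b_equiv:
  assumes nt: "\<one> \<noteq> \<zero>"
  shows "(\<forall>u \<in> Units R. \<one> \<oplus> u \<in> Units R \<union> jacobson R) \<longleftrightarrow> sublocalizable R"
proof
  assume H: "\<forall>u \<in> Units R. \<one> \<oplus> u \<in> Units R \<union> jacobson R"
  have JI: "ideal (jacobson R) R" using jac_ideal[OF nt] .
  have "u \<oplus> v \<in> Units R \<union> jacobson R" if u: "u \<in> Units R" and v: "v \<in> Units R" for u v
  proof -
    have uc: "u \<in> carrier R" "inv u \<in> carrier R" using u by auto
    have vc: "v \<in> carrier R" using v by auto
    have w: "inv u \<otimes> v \<in> Units R" using u v by auto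
    then have w1: "\<one> \<oplus> inv u \<otimes> v \<in> Units R \<union> jacobson R" using H by blast
    have w1c: "\<one> \<oplus> inv u \<otimes> v \<in> carrier R" using uc vc by simp
    have "u \<otimes> (\<one> \<oplus> inv u \<otimes> v) = u \<otimes> \<one> \<oplus> (u \<otimes> inv u) \<otimes> v"
      using uc vc by (simp add: r_distr m_assoc)
    also have "\<dots> = u \<oplus> v" using uc vc u by (simp add: Units_r_inv)
    finally have eq: "u \<otimes> (\<one> \<oplus> inv u \<otimes> v) = u \<oplus> v" .
    show ?thesis
    proof (cases "\<one> \<oplus> inv u \<otimes> v \<in> Units R")
      case True
      then have "u \<otimes> (\<one> \<oplus> inv u \<otimes> v) \<in> Units R" using u by simp
      then show ?thesis using eq by simp
    next
      case False
      then have "\<one> \<oplus> inv u \<otimes> v \<in> jacobson R" using w1 by blast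
      then have "u \<otimes> (\<one> \<oplus> inv u \<otimes> v) \<in> jacobson R" using ideal.I_r_closed[OF JI _ uc(1)] m_comm[OF uc(1) w1c] by metis
      then show ?thesis using eq by simp
    qed
  qed
  then show "sublocalizable R" unfolding sublocalizable_def using nt by blast
next
  assume "sublocalizable R"
  then show "\<forall>u \<in> Units R. \<one> \<oplus> u \<in> Units R \<union> jacobson R"
    unfolding sublocalizable_def using Units_one_closed by blast
qed


lemma main_thm:
  assumes "\<one>\<^bsub>R\<^esub> \<noteq> \<zero>\<^bsub>R\<^esub>"
  shows
    "((\<forall>u \<in> Units R. \<one>\<^bsub>R\<^esub> \<oplus>\<^bsub>R\<^esub> u \<in> Units R \<union> jacobson R) \<longleftrightarrow> sublocalizable R)
   \<comment> \<open>(c) \<longleftrightarrow> (a)\<close>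
   \<and> (subring (Units R \<union> jacobson R) R \<longleftrightarrow> sublocalizable R)
   \<comment> \<open>(d) \<longleftrightarrow> (a)\<close>
   \<and> ((\<exists>I. ideal I R \<and> I \<noteq> carrier R \<and> subring (Units R \<union> I) R) \<longleftrightarrow> sublocalizable R)
   \<comment> \<open>(e) \<longleftrightarrow> (a)\<close>
   \<and> ((\<forall>I. (ideal I R \<and> I \<noteq> carrier R \<and> subring (Units R \<union> I) R) \<longleftrightarrow> I = jacobson R)
        \<longleftrightarrow> sublocalizable R)
   \<comment> \<open>(f) \<longleftrightarrow> (a)\<close>
   \<and> ((\<exists>B. subring B R \<and> Units R \<subseteq> B \<and> ideal (B - Units R) R) \<longleftrightarrow> sublocalizable R)
   \<comment> \<open>(f), uniqueness: B = A^x \<union> J(A) and B - A^x = J(A)\<close>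
   \<and> (\<forall>B. subring B R \<and> Units R \<subseteq> B \<and> ideal (B - Units R) R \<longrightarrow>
          B = Units R \<union> jacobson R \<and> B - Units R = jacobson R)
   \<comment> \<open>(g) \<longleftrightarrow> (a)\<close>
   \<and> ((subring (Units R \<union> jacobson R) R
        \<and> local_ring (R\<lparr>carrier := Units R \<union> jacobson R\<rparr>)
        \<and> maximalideal (jacobson R) (R\<lparr>carrier := Units R \<union> jacobson R\<rparr>)
        \<and> Units (R\<lparr>carrier := Units R \<union> jacobson R\<rparr>) = Units R)
       \<longleftrightarrow> sublocalizable R)
   \<comment> \<open>(h) \<longleftrightarrow> (a)\<close>
   \<and> ((\<exists>B. subring B R \<and> local_ring (R\<lparr>carrier := B\<rparr>)
          \<and> maximalideal (jacobson R) (R\<lparr>carrier := B\<rparr>)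
          \<and> Units (R\<lparr>carrier := B\<rparr>) = Units R) \<longleftrightarrow> sublocalizable R)
   \<comment> \<open>(h), uniqueness\<close>
   \<and> (\<forall>B1 B2. (subring B1 R \<and> local_ring (R\<lparr>carrier := B1\<rparr>)
          \<and> maximalideal (jacobson R) (R\<lparr>carrier := B1\<rparr>)
          \<and> Units (R\<lparr>carrier := B1\<rparr>) = Units R)
        \<and> (subring B2 R \<and> local_ring (R\<lparr>carrier := B2\<rparr>)
          \<and> maximalideal (jacobson R) (R\<lparr>carrier := B2\<rparr>)
          \<and> Units (R\<lparr>carrier := B2\<rparr>) = Units R) \<longrightarrow> B1 = B2)
   \<comment> \<open>(i) \<longleftrightarrow> (a)\<close>
   \<and> ((\<exists>B. subring B R \<and> local_ring (R\<lparr>carrier := B\<rparr>)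
          \<and> (\<exists>M. maximalideal M (R\<lparr>carrier := B\<rparr>) \<and> ideal M R)
          \<and> Units (R\<lparr>carrier := B\<rparr>) = Units R) \<longleftrightarrow> sublocalizable R)
   \<comment> \<open>(i), uniqueness\<close>
   \<and> (\<forall>B1 B2. (subring B1 R \<and> local_ring (R\<lparr>carrier := B1\<rparr>)
          \<and> (\<exists>M. maximalideal M (R\<lparr>carrier := B1\<rparr>) \<and> ideal M R)
          \<and> Units (R\<lparr>carrier := B1\<rparr>) = Units R)
        \<and> (subring B2 R \<and> local_ring (R\<lparr>carrier := B2\<rparr>)
          \<and> (\<exists>M. maximalideal M (R\<lparr>carrier := B2\<rparr>) \<and> ideal M R)
          \<and> Units (R\<lparr>carrier := B2\<rparr>) = Units R) \<longrightarrow> B1 = B2)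
   \<comment> \<open>(j) \<longleftrightarrow> (a)\<close>
   \<and> ((\<exists>B. subring B R \<and> local_ring (R\<lparr>carrier := B\<rparr>)
          \<and> Units (R\<lparr>carrier := B\<rparr>) = Units R
          \<and> jacobson (R\<lparr>carrier := B\<rparr>) = jacobson R) \<longleftrightarrow> sublocalizable R)
   \<comment> \<open>(j), uniqueness\<close>
   \<and> (\<forall>B1 B2. (subring B1 R \<and> local_ring (R\<lparr>carrier := B1\<rparr>)
          \<and> Units (R\<lparr>carrier := B1\<rparr>) = Units R
          \<and> jacobson (R\<lparr>carrier := B1\<rparr>) = jacobson R)
        \<and> (subring B2 R \<and> local_ring (R\<lparr>carrier := B2\<rparr>)
          \<and> Units (R\<lparr>carrier := B2\<rparr>) = Units R
          \<and> jacobson (R\<lparr>carrier := B2\<rparr>) = jacobson R) \<longrightarrow> B1 = B2)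
   \<comment> \<open>(k) \<longleftrightarrow> (a)\<close>
   \<and> (sublocalizable (R Quot jacobson R) \<longleftrightarrow> sublocalizable R)
   \<comment> \<open>(l) \<longleftrightarrow> (a)\<close>
   \<and> (unit_additive (R Quot jacobson R) \<longleftrightarrow> sublocalizable R)"
proof -
  have nt: "\<one> \<noteq> \<zero>" by fact
  have JI: "ideal (jacobson R) R" using jac_ideal[OF nt] .
  have Jc: "jacobson R \<subseteq> carrier R" using jac_carr .
  have JU: "\<And>x. x \<in> jacobson R \<Longrightarrow> x \<notin> Units R" using jac_no_units[OF nt] by blast
  have Jprop: "jacobson R \<noteq> carrier R" using JU[of "\<one>"] by auto
  have FC: "subring (Units R \<union> jacobson R) R \<longleftrightarrow> sublocalizable R"
    using subl_subring subring_subl[OF nt] by blast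
  have KEY: "\<And>B. subring B R \<Longrightarrow> Units R \<subseteq> B \<Longrightarrow> ideal (B - Units R) R \<Longrightarrow>
      B = Units R \<union> jacobson R \<and> B - Units R = jacobson R"
    using key[OF nt] by blast
  have noU: "I \<inter> Units R = {}" if I: "ideal I R" "I \<noteq> carrier R" for I
  proof (rule ccontr)
    assume "I \<inter> Units R \<noteq> {}"
    then obtain u where u: "u \<in> I" "u \<in> Units R" by blast
    have "inv u \<otimes> u \<in> I" using ideal.I_l_closed[OF I(1) u(1) Units_inv_closed[OF u(2)]] .
    then have "\<one> \<in> I" using Units_l_inv[OF u(2)] by simp
    then show False using ideal.one_imp_carrier[OF I(1)] I(2) by blast
  qed
  have dI: "I = jacobson R" if I: "ideal I R" "I \<noteq> carrier R" "subring (Units R \<union> I) R" for I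
  proof -
    have e: "(Units R \<union> I) - Units R = I" using noU[OF I(1,2)] by blast
    have "ideal ((Units R \<union> I) - Units R) R" unfolding e by fact
    then have "(Units R \<union> I) - Units R = jacobson R" using KEY[OF I(3)] by blast
    then show ?thesis using e by simp
  qed
  have fb: "(\<forall>u \<in> Units R. \<one>\<^bsub>R\<^esub> \<oplus>\<^bsub>R\<^esub> u \<in> Units R \<union> jacobson R) \<longleftrightarrow> sublocalizable R"
    using b_equiv[OF nt] .
  have fd: "(\<exists>I. ideal I R \<and> I \<noteq> carrier R \<and> subring (Units R \<union> I) R) \<longleftrightarrow> sublocalizable R"
    using dI FC JI Jprop by blast
  have fe: "(\<forall>I. (ideal I R \<and> I \<noteq> carrier R \<and> subring (Units R \<union> I) R) \<longleftrightarrow> I = jacobson R)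
        \<longleftrightarrow> sublocalizable R"
    using dI FC JI Jprop by blast
  have UJe: "(Units R \<union> jacobson R) - Units R = jacobson R" using JU by blast
  have ff: "(\<exists>B. subring B R \<and> Units R \<subseteq> B \<and> ideal (B - Units R) R) \<longleftrightarrow> sublocalizable R"
  proof
    assume "\<exists>B. subring B R \<and> Units R \<subseteq> B \<and> ideal (B - Units R) R"
    then obtain B where "subring B R" "Units R \<subseteq> B" "ideal (B - Units R) R" by blast
    then have "B = Units R \<union> jacobson R" using KEY by blast
    then show "sublocalizable R" using FC \<open>subring B R\<close> by blast
  next
    assume "sublocalizable R"
    then have "subring (Units R \<union> jacobson R) R" using FC by blast
    moreover have "ideal ((Units R \<union> jacobson R) - Units R) R" unfolding UJe by (rule JI)
    ultimately show "\<exists>B. subring B R \<and> Units R \<subseteq> B \<and> ideal (B - Units R) R" by blast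
  qed
  have ffu: "\<forall>B. subring B R \<and> Units R \<subseteq> B \<and> ideal (B - Units R) R \<longrightarrow>
          B = Units R \<union> jacobson R \<and> B - Units R = jacobson R"
    using KEY by blast
  have fg: "(subring (Units R \<union> jacobson R) R
        \<and> local_ring (R\<lparr>carrier := Units R \<union> jacobson R\<rparr>)
        \<and> maximalideal (jacobson R) (R\<lparr>carrier := Units R \<union> jacobson R\<rparr>)
        \<and> Units (R\<lparr>carrier := Units R \<union> jacobson R\<rparr>) = Units R)
       \<longleftrightarrow> sublocalizable R"
    using G FC by blast
  have hB: "B = Units R \<union> jacobson R" if H: "subring B R" "local_ring (R\<lparr>carrier := B\<rparr>)"
          "maximalideal (jacobson R) (R\<lparr>carrier := B\<rparr>)"
          "Units (R\<lparr>carrier := B\<rparr>) = Units R" for B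
  proof -
    obtain M where M: "\<forall>M'. maximalideal M' (R\<lparr>carrier := B\<rparr>) \<longrightarrow> M' = M" "B - Units R = M" "Units R \<subseteq> B"
      using HB[OF H(1,2,4)] by blast
    have "M = jacobson R" using M(1) H(3) by blast
    then show ?thesis using M(2,3) by blast
  qed
  have iB: "B = Units R \<union> jacobson R" if H: "subring B R" "local_ring (R\<lparr>carrier := B\<rparr>)"
          "\<exists>M. maximalideal M (R\<lparr>carrier := B\<rparr>) \<and> ideal M R"
          "Units (R\<lparr>carrier := B\<rparr>) = Units R" for B
  proof -
    obtain M where M: "\<forall>M'. maximalideal M' (R\<lparr>carrier := B\<rparr>) \<longrightarrow> M' = M" "B - Units R = M" "Units R \<subseteq> B"
      using HB[OF H(1,2,4)] by blast
    obtain M' where M': "maximalideal M' (R\<lparr>carrier := B\<rparr>)" "ideal M' R" using H(3) by blast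
    have "M' = M" using M(1) M'(1) by blast
    then have "ideal (B - Units R) R" using M(2) M'(2) by simp
    then show ?thesis using KEY[OF H(1) M(3)] by blast
  qed
  have jB: "B = Units R \<union> jacobson R" if H: "subring B R" "local_ring (R\<lparr>carrier := B\<rparr>)"
          "Units (R\<lparr>carrier := B\<rparr>) = Units R"
          "jacobson (R\<lparr>carrier := B\<rparr>) = jacobson R" for B
  proof -
    obtain M where M: "B - Units R = M" "jacobson (R\<lparr>carrier := B\<rparr>) = M" "Units R \<subseteq> B"
      using HB[OF H(1,2,3)] by blast
    have "M = jacobson R" using M(2) H(4) by simp
    then show ?thesis using M(1,3) by blast
  qed
  have fh: "(\<exists>B. subring B R \<and> local_ring (R\<lparr>carrier := B\<rparr>)
          \<and> maximalideal (jacobson R) (R\<lparr>carrier := B\<rparr>)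
          \<and> Units (R\<lparr>carrier := B\<rparr>) = Units R) \<longleftrightarrow> sublocalizable R"
  proof
    assume "\<exists>B. subring B R \<and> local_ring (R\<lparr>carrier := B\<rparr>)
          \<and> maximalideal (jacobson R) (R\<lparr>carrier := B\<rparr>)
          \<and> Units (R\<lparr>carrier := B\<rparr>) = Units R"
    then obtain B where "subring B R" "local_ring (R\<lparr>carrier := B\<rparr>)"
          "maximalideal (jacobson R) (R\<lparr>carrier := B\<rparr>)"
          "Units (R\<lparr>carrier := B\<rparr>) = Units R" by blast
    then show "sublocalizable R" using hB FC by metis
  next
    assume "sublocalizable R"
    then show "\<exists>B. subring B R \<and> local_ring (R\<lparr>carrier := B\<rparr>)
          \<and> maximalideal (jacobson R) (R\<lparr>carrier := B\<rparr>)
          \<and> Units (R\<lparr>carrier := B\<rparr>) = Units R" using G by blast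
  qed
  have fhu: "\<forall>B1 B2. (subring B1 R \<and> local_ring (R\<lparr>carrier := B1\<rparr>)
          \<and> maximalideal (jacobson R) (R\<lparr>carrier := B1\<rparr>)
          \<and> Units (R\<lparr>carrier := B1\<rparr>) = Units R)
        \<and> (subring B2 R \<and> local_ring (R\<lparr>carrier := B2\<rparr>)
          \<and> maximalideal (jacobson R) (R\<lparr>carrier := B2\<rparr>)
          \<and> Units (R\<lparr>carrier := B2\<rparr>) = Units R) \<longrightarrow> B1 = B2"
    using hB by metis
  have fi: "(\<exists>B. subring B R \<and> local_ring (R\<lparr>carrier := B\<rparr>)
          \<and> (\<exists>M. maximalideal M (R\<lparr>carrier := B\<rparr>) \<and> ideal M R)
          \<and> Units (R\<lparr>carrier := B\<rparr>) = Units R) \<longleftrightarrow> sublocalizable R"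
  proof
    assume "\<exists>B. subring B R \<and> local_ring (R\<lparr>carrier := B\<rparr>)
          \<and> (\<exists>M. maximalideal M (R\<lparr>carrier := B\<rparr>) \<and> ideal M R)
          \<and> Units (R\<lparr>carrier := B\<rparr>) = Units R"
    then obtain B where "subring B R" "local_ring (R\<lparr>carrier := B\<rparr>)"
          "\<exists>M. maximalideal M (R\<lparr>carrier := B\<rparr>) \<and> ideal M R"
          "Units (R\<lparr>carrier := B\<rparr>) = Units R" by blast
    then show "sublocalizable R" using iB FC by metis
  next
    assume "sublocalizable R"
    then show "\<exists>B. subring B R \<and> local_ring (R\<lparr>carrier := B\<rparr>)
          \<and> (\<exists>M. maximalideal M (R\<lparr>carrier := B\<rparr>) \<and> ideal M R)
          \<and> Units (R\<lparr>carrier := B\<rparr>) = Units R" using G JI by blast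
  qed
  have fiu: "\<forall>B1 B2. (subring B1 R \<and> local_ring (R\<lparr>carrier := B1\<rparr>)
          \<and> (\<exists>M. maximalideal M (R\<lparr>carrier := B1\<rparr>) \<and> ideal M R)
          \<and> Units (R\<lparr>carrier := B1\<rparr>) = Units R)
        \<and> (subring B2 R \<and> local_ring (R\<lparr>carrier := B2\<rparr>)
          \<and> (\<exists>M. maximalideal M (R\<lparr>carrier := B2\<rparr>) \<and> ideal M R)
          \<and> Units (R\<lparr>carrier := B2\<rparr>) = Units R) \<longrightarrow> B1 = B2"
    using iB by metis
  have fj: "(\<exists>B. subring B R \<and> local_ring (R\<lparr>carrier := B\<rparr>)
          \<and> Units (R\<lparr>carrier := B\<rparr>) = Units R
          \<and> jacobson (R\<lparr>carrier := B\<rparr>) = jacobson R) \<longleftrightarrow> sublocalizable R"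
  proof
    assume "\<exists>B. subring B R \<and> local_ring (R\<lparr>carrier := B\<rparr>)
          \<and> Units (R\<lparr>carrier := B\<rparr>) = Units R
          \<and> jacobson (R\<lparr>carrier := B\<rparr>) = jacobson R"
    then obtain B where "subring B R" "local_ring (R\<lparr>carrier := B\<rparr>)"
          "Units (R\<lparr>carrier := B\<rparr>) = Units R"
          "jacobson (R\<lparr>carrier := B\<rparr>) = jacobson R" by blast
    then show "sublocalizable R" using jB FC by metis
  next
    assume "sublocalizable R"
    then show "\<exists>B. subring B R \<and> local_ring (R\<lparr>carrier := B\<rparr>)
          \<and> Units (R\<lparr>carrier := B\<rparr>) = Units R
          \<and> jacobson (R\<lparr>carrier := B\<rparr>) = jacobson R" using G by blast
  qed
  have fju: "\<forall>B1 B2. (subring B1 R \<and> local_ring (R\<lparr>carrier := B1\<rparr>)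
          \<and> Units (R\<lparr>carrier := B1\<rparr>) = Units R
          \<and> jacobson (R\<lparr>carrier := B1\<rparr>) = jacobson R)
        \<and> (subring B2 R \<and> local_ring (R\<lparr>carrier := B2\<rparr>)
          \<and> Units (R\<lparr>carrier := B2\<rparr>) = Units R
          \<and> jacobson (R\<lparr>carrier := B2\<rparr>) = jacobson R) \<longrightarrow> B1 = B2"
    using jB by metis
  have fk: "sublocalizable (R Quot jacobson R) \<longleftrightarrow> sublocalizable R" using Q_subl[OF nt] .
  have fl: "unit_additive (R Quot jacobson R) \<longleftrightarrow> sublocalizable R" using Q_ua[OF nt] .
  show ?thesis
    by (intro conjI) (fact fb FC fd fe ff ffu fg fh fhu fi fiu fj fju fk fl)+
qed


end

theorem proposition9p10:
  fixes R :: "('a, 'b) ring_scheme"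
  assumes "cring R" and "\<one>\<^bsub>R\<^esub> \<noteq> \<zero>\<^bsub>R\<^esub>"
  shows
    \<comment> \<open>(b) \<longleftrightarrow> (a)\<close>
    "((\<forall>u \<in> Units R. \<one>\<^bsub>R\<^esub> \<oplus>\<^bsub>R\<^esub> u \<in> Units R \<union> jacobson R) \<longleftrightarrow> sublocalizable R)
   \<comment> \<open>(c) \<longleftrightarrow> (a)\<close>
   \<and> (subring (Units R \<union> jacobson R) R \<longleftrightarrow> sublocalizable R)
   \<comment> \<open>(d) \<longleftrightarrow> (a)\<close>
   \<and> ((\<exists>I. ideal I R \<and> I \<noteq> carrier R \<and> subring (Units R \<union> I) R) \<longleftrightarrow> sublocalizable R)
   \<comment> \<open>(e) \<longleftrightarrow> (a)\<close>
   \<and> ((\<forall>I. (ideal I R \<and> I \<noteq> carrier R \<and> subring (Units R \<union> I) R) \<longleftrightarrow> I = jacobson R)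
        \<longleftrightarrow> sublocalizable R)
   \<comment> \<open>(f) \<longleftrightarrow> (a)\<close>
   \<and> ((\<exists>B. subring B R \<and> Units R \<subseteq> B \<and> ideal (B - Units R) R) \<longleftrightarrow> sublocalizable R)
   \<comment> \<open>(f), uniqueness: B = A^x \<union> J(A) and B - A^x = J(A)\<close>
   \<and> (\<forall>B. subring B R \<and> Units R \<subseteq> B \<and> ideal (B - Units R) R \<longrightarrow>
          B = Units R \<union> jacobson R \<and> B - Units R = jacobson R)
   \<comment> \<open>(g) \<longleftrightarrow> (a)\<close>
   \<and> ((subring (Units R \<union> jacobson R) R
        \<and> local_ring (R\<lparr>carrier := Units R \<union> jacobson R\<rparr>)
        \<and> maximalideal (jacobson R) (R\<lparr>carrier := Units R \<union> jacobson R\<rparr>)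
        \<and> Units (R\<lparr>carrier := Units R \<union> jacobson R\<rparr>) = Units R)
       \<longleftrightarrow> sublocalizable R)
   \<comment> \<open>(h) \<longleftrightarrow> (a)\<close>
   \<and> ((\<exists>B. subring B R \<and> local_ring (R\<lparr>carrier := B\<rparr>)
          \<and> maximalideal (jacobson R) (R\<lparr>carrier := B\<rparr>)
          \<and> Units (R\<lparr>carrier := B\<rparr>) = Units R) \<longleftrightarrow> sublocalizable R)
   \<comment> \<open>(h), uniqueness\<close>
   \<and> (\<forall>B1 B2. (subring B1 R \<and> local_ring (R\<lparr>carrier := B1\<rparr>)
          \<and> maximalideal (jacobson R) (R\<lparr>carrier := B1\<rparr>)
          \<and> Units (R\<lparr>carrier := B1\<rparr>) = Units R)
        \<and> (subring B2 R \<and> local_ring (R\<lparr>carrier := B2\<rparr>)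
          \<and> maximalideal (jacobson R) (R\<lparr>carrier := B2\<rparr>)
          \<and> Units (R\<lparr>carrier := B2\<rparr>) = Units R) \<longrightarrow> B1 = B2)
   \<comment> \<open>(i) \<longleftrightarrow> (a)\<close>
   \<and> ((\<exists>B. subring B R \<and> local_ring (R\<lparr>carrier := B\<rparr>)
          \<and> (\<exists>M. maximalideal M (R\<lparr>carrier := B\<rparr>) \<and> ideal M R)
          \<and> Units (R\<lparr>carrier := B\<rparr>) = Units R) \<longleftrightarrow> sublocalizable R)
   \<comment> \<open>(i), uniqueness\<close>
   \<and> (\<forall>B1 B2. (subring B1 R \<and> local_ring (R\<lparr>carrier := B1\<rparr>)
          \<and> (\<exists>M. maximalideal M (R\<lparr>carrier := B1\<rparr>) \<and> ideal M R)
          \<and> Units (R\<lparr>carrier := B1\<rparr>) = Units R)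
        \<and> (subring B2 R \<and> local_ring (R\<lparr>carrier := B2\<rparr>)
          \<and> (\<exists>M. maximalideal M (R\<lparr>carrier := B2\<rparr>) \<and> ideal M R)
          \<and> Units (R\<lparr>carrier := B2\<rparr>) = Units R) \<longrightarrow> B1 = B2)
   \<comment> \<open>(j) \<longleftrightarrow> (a)\<close>
   \<and> ((\<exists>B. subring B R \<and> local_ring (R\<lparr>carrier := B\<rparr>)
          \<and> Units (R\<lparr>carrier := B\<rparr>) = Units R
          \<and> jacobson (R\<lparr>carrier := B\<rparr>) = jacobson R) \<longleftrightarrow> sublocalizable R)
   \<comment> \<open>(j), uniqueness\<close>
   \<and> (\<forall>B1 B2. (subring B1 R \<and> local_ring (R\<lparr>carrier := B1\<rparr>)
          \<and> Units (R\<lparr>carrier := B1\<rparr>) = Units R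
          \<and> jacobson (R\<lparr>carrier := B1\<rparr>) = jacobson R)
        \<and> (subring B2 R \<and> local_ring (R\<lparr>carrier := B2\<rparr>)
          \<and> Units (R\<lparr>carrier := B2\<rparr>) = Units R
          \<and> jacobson (R\<lparr>carrier := B2\<rparr>) = jacobson R) \<longrightarrow> B1 = B2)
   \<comment> \<open>(k) \<longleftrightarrow> (a)\<close>
   \<and> (sublocalizable (R Quot jacobson R) \<longleftrightarrow> sublocalizable R)
   \<comment> \<open>(l) \<longleftrightarrow> (a)\<close>
   \<and> (unit_additive (R Quot jacobson R) \<longleftrightarrow> sublocalizable R)"
  using cring.main_thm[OF assms] .

end
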